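(* Let $\mathcal{A}$ be an abelian category. (1) Let $M,N_1,\dots,N_n$ be objects of $\mathcal{A}$. Then $\bigoplus_{i=1}^n N_i$ is strongly $M$-Rickart if and only if $N_i$ is strongly $M$-Rickart for every $i\in\{1,\dots,n\}$. (2) Let $M_1,\dots,M_n,N$ be objects of $\mathcal{A}$. Then $N$ is dual strongly $\bigoplus_{i=1}^n M_i$-Rickart if and only if $N$ is dual strongly $M_i$-Rickart for every $i\in\{1,\dots,n\}$.
   Context: A morphism $f:X\to Y$ is a section if $f'f=1_X$ for some $f'$, a retraction if $ff'=1_Y$ for some $f'$. A monomorphism $k:K\to X$ is fully invariant if for every $h:X\to X$ there is $\alpha:K\to K$ with $hk=k\alpha$; an epimorphism $c:X\to C$ is fully coinvariant if for every $h:X\to X$ there is $\gamma:C\to C$ with $ch=\gamma c$. For objects $M,N$: $N$ is strongly $M$-Rickart if the kernel of every morphism $f:M\to N$ is a fully invariant section; $N$ is dual strongly $M$-Rickart if the cokernel of every morphism $f:M\to N$ is a fully coinvariant retraction. *)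

theory Defs
  imports Main
begin

text \<open>A (locally small, not necessarily small) category given by explicit carriers.
  Comp g f is the composite g after f (defined when Cod f = Dom g).\<close>

record ('o, 'm) cat =
  Obj :: "'o set"
  Arr :: "'m set"
  Dom :: "'m \<Rightarrow> 'o"
  Cod :: "'m \<Rightarrow> 'o"
  Comp :: "'m \<Rightarrow> 'm \<Rightarrow> 'm"
  Id :: "'o \<Rightarrow> 'm"

definition hom :: "('o, 'm) cat \<Rightarrow> 'o \<Rightarrow> 'o \<Rightarrow> 'm set" where
  "hom C a b = {f \<in> Arr C. Dom C f = a \<and> Cod C f = b}"

definition category :: "('o, 'm) cat \<Rightarrow> bool" where
  "category C \<longleftrightarrow>
     (\<forall>f \<in> Arr C. Dom C f \<in> Obj C \<and> Cod C f \<in> Obj C) \<and>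
     (\<forall>a \<in> Obj C. Id C a \<in> hom C a a) \<and>
     (\<forall>a b c f g. f \<in> hom C a b \<longrightarrow> g \<in> hom C b c \<longrightarrow> Comp C g f \<in> hom C a c) \<and>
     (\<forall>a b c d f g h. f \<in> hom C a b \<longrightarrow> g \<in> hom C b c \<longrightarrow> h \<in> hom C c d \<longrightarrow>
        Comp C h (Comp C g f) = Comp C (Comp C h g) f) \<and>
     (\<forall>a b f. f \<in> hom C a b \<longrightarrow> Comp C f (Id C a) = f \<and> Comp C (Id C b) f = f)"

definition mono :: "('o, 'm) cat \<Rightarrow> 'm \<Rightarrow> bool" where
  "mono C f \<longleftrightarrow> f \<in> Arr C \<and>
     (\<forall>x g h. g \<in> hom C x (Dom C f) \<longrightarrow> h \<in> hom C x (Dom C f) \<longrightarrow>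
        Comp C f g = Comp C f h \<longrightarrow> g = h)"

definition epi :: "('o, 'm) cat \<Rightarrow> 'm \<Rightarrow> bool" where
  "epi C f \<longleftrightarrow> f \<in> Arr C \<and>
     (\<forall>x g h. g \<in> hom C (Cod C f) x \<longrightarrow> h \<in> hom C (Cod C f) x \<longrightarrow>
        Comp C g f = Comp C h f \<longrightarrow> g = h)"

definition zero_obj :: "('o, 'm) cat \<Rightarrow> 'o \<Rightarrow> bool" where
  "zero_obj C z \<longleftrightarrow> z \<in> Obj C \<and>
     (\<forall>a \<in> Obj C. (\<exists>!f. f \<in> hom C z a) \<and> (\<exists>!f. f \<in> hom C a z))"

definition zero_mor :: "('o, 'm) cat \<Rightarrow> 'm \<Rightarrow> bool" where
  "zero_mor C f \<longleftrightarrow> f \<in> Arr C \<and>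
     (\<exists>z g h. zero_obj C z \<and> g \<in> hom C (Dom C f) z \<and> h \<in> hom C z (Cod C f) \<and> f = Comp C h g)"

definition is_kernel :: "('o, 'm) cat \<Rightarrow> 'm \<Rightarrow> 'm \<Rightarrow> bool" where
  "is_kernel C f k \<longleftrightarrow> f \<in> Arr C \<and> k \<in> Arr C \<and> Cod C k = Dom C f \<and>
     zero_mor C (Comp C f k) \<and>
     (\<forall>g \<in> Arr C. Cod C g = Dom C f \<longrightarrow> zero_mor C (Comp C f g) \<longrightarrow>
        (\<exists>!u. u \<in> hom C (Dom C g) (Dom C k) \<and> Comp C k u = g))"

definition is_cokernel :: "('o, 'm) cat \<Rightarrow> 'm \<Rightarrow> 'm \<Rightarrow> bool" where
  "is_cokernel C f c \<longleftrightarrow> f \<in> Arr C \<and> c \<in> Arr C \<and> Dom C c = Cod C f \<and>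
     zero_mor C (Comp C c f) \<and>
     (\<forall>g \<in> Arr C. Dom C g = Cod C f \<longrightarrow> zero_mor C (Comp C g f) \<longrightarrow>
        (\<exists>!u. u \<in> hom C (Cod C c) (Cod C g) \<and> Comp C u c = g))"

definition is_product :: "('o, 'm) cat \<Rightarrow> 'o \<Rightarrow> 'o \<Rightarrow> 'o \<Rightarrow> 'm \<Rightarrow> 'm \<Rightarrow> bool" where
  "is_product C a b p p1 p2 \<longleftrightarrow> p1 \<in> hom C p a \<and> p2 \<in> hom C p b \<and>
     (\<forall>x f g. f \<in> hom C x a \<longrightarrow> g \<in> hom C x b \<longrightarrow>
        (\<exists>!u. u \<in> hom C x p \<and> Comp C p1 u = f \<and> Comp C p2 u = g))"

definition is_coproduct :: "('o, 'm) cat \<Rightarrow> 'o \<Rightarrow> 'o \<Rightarrow> 'o \<Rightarrow> 'm \<Rightarrow> 'm \<Rightarrow> bool" where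
  "is_coproduct C a b s i1 i2 \<longleftrightarrow> i1 \<in> hom C a s \<and> i2 \<in> hom C b s \<and>
     (\<forall>x f g. f \<in> hom C a x \<longrightarrow> g \<in> hom C b x \<longrightarrow>
        (\<exists>!u. u \<in> hom C s x \<and> Comp C u i1 = f \<and> Comp C u i2 = g))"

definition abelian_cat :: "('o, 'm) cat \<Rightarrow> bool" where
  "abelian_cat C \<longleftrightarrow> category C \<and>
     (\<exists>z. zero_obj C z) \<and>
     (\<forall>a \<in> Obj C. \<forall>b \<in> Obj C. \<exists>p p1 p2. is_product C a b p p1 p2) \<and>
     (\<forall>a \<in> Obj C. \<forall>b \<in> Obj C. \<exists>s i1 i2. is_coproduct C a b s i1 i2) \<and>
     (\<forall>f \<in> Arr C. \<exists>k. is_kernel C f k) \<and>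
     (\<forall>f \<in> Arr C. \<exists>c. is_cokernel C f c) \<and>
     (\<forall>m. mono C m \<longrightarrow> (\<exists>f. is_kernel C f m)) \<and>
     (\<forall>e. epi C e \<longrightarrow> (\<exists>f. is_cokernel C f e))"

definition is_biproduct ::
  "('o, 'm) cat \<Rightarrow> nat \<Rightarrow> (nat \<Rightarrow> 'o) \<Rightarrow> 'o \<Rightarrow> (nat \<Rightarrow> 'm) \<Rightarrow> (nat \<Rightarrow> 'm) \<Rightarrow> bool" where
  "is_biproduct C n N S \<iota> \<pi> \<longleftrightarrow> S \<in> Obj C \<and>
     (\<forall>i \<in> {1..n}. \<iota> i \<in> hom C (N i) S \<and> \<pi> i \<in> hom C S (N i) \<and>
        Comp C (\<pi> i) (\<iota> i) = Id C (N i)) \<and>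
     (\<forall>i \<in> {1..n}. \<forall>j \<in> {1..n}. i \<noteq> j \<longrightarrow> zero_mor C (Comp C (\<pi> j) (\<iota> i))) \<and>
     (\<forall>x f. (\<forall>i \<in> {1..n}. f i \<in> hom C x (N i)) \<longrightarrow>
        (\<exists>!u. u \<in> hom C x S \<and> (\<forall>i \<in> {1..n}. Comp C (\<pi> i) u = f i))) \<and>
     (\<forall>x f. (\<forall>i \<in> {1..n}. f i \<in> hom C (N i) x) \<longrightarrow>
        (\<exists>!u. u \<in> hom C S x \<and> (\<forall>i \<in> {1..n}. Comp C u (\<iota> i) = f i)))"

definition is_section :: "('o, 'm) cat \<Rightarrow> 'm \<Rightarrow> bool" where
  "is_section C f \<longleftrightarrow> f \<in> Arr C \<and>
     (\<exists>f'. f' \<in> hom C (Cod C f) (Dom C f) \<and> Comp C f' f = Id C (Dom C f))"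

definition is_retraction :: "('o, 'm) cat \<Rightarrow> 'm \<Rightarrow> bool" where
  "is_retraction C f \<longleftrightarrow> f \<in> Arr C \<and>
     (\<exists>f'. f' \<in> hom C (Cod C f) (Dom C f) \<and> Comp C f f' = Id C (Cod C f))"

definition fully_invariant :: "('o, 'm) cat \<Rightarrow> 'm \<Rightarrow> bool" where
  "fully_invariant C k \<longleftrightarrow> mono C k \<and>
     (\<forall>h \<in> hom C (Cod C k) (Cod C k).
        \<exists>\<alpha> \<in> hom C (Dom C k) (Dom C k). Comp C h k = Comp C k \<alpha>)"

definition fully_coinvariant :: "('o, 'm) cat \<Rightarrow> 'm \<Rightarrow> bool" where
  "fully_coinvariant C c \<longleftrightarrow> epi C c \<and>
     (\<forall>h \<in> hom C (Dom C c) (Dom C c).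
        \<exists>\<gamma> \<in> hom C (Cod C c) (Cod C c). Comp C c h = Comp C \<gamma> c)"

text \<open>N is strongly M-Rickart: the kernel of every f : M \<rightarrow> N is a fully invariant section.
  (Kernels are unique up to isomorphism; we require it of every kernel.)\<close>
definition strongly_rickart :: "('o, 'm) cat \<Rightarrow> 'o \<Rightarrow> 'o \<Rightarrow> bool" where
  "strongly_rickart C M N \<longleftrightarrow>
     (\<forall>f \<in> hom C M N. \<forall>k. is_kernel C f k \<longrightarrow> is_section C k \<and> fully_invariant C k)"

definition dual_strongly_rickart :: "('o, 'm) cat \<Rightarrow> 'o \<Rightarrow> 'o \<Rightarrow> bool" where
  "dual_strongly_rickart C M N \<longleftrightarrow>
     (\<forall>f \<in> hom C M N. \<forall>c. is_cokernel C f c \<longrightarrow> is_retraction C c \<and> fully_coinvariant C c)"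

end

theory Submission
  imports Defs
begin

primrec phis :: "('o, 'm) cat \<Rightarrow> 'o \<Rightarrow> (nat \<Rightarrow> 'm) \<Rightarrow> nat \<Rightarrow> 'm" where
  "phis C M e 0 = Id C M"
| "phis C M e (Suc m) = Comp C (e (Suc m)) (phis C M e m)"

lemma Ex1_unique_lemma: "\<exists>!x. P x \<Longrightarrow> P a \<Longrightarrow> P b \<Longrightarrow> a = b"
  by blast

locale kcat =
  fixes C :: "('o, 'm) cat"
  assumes cat: "category C"
  and zex: "\<exists>z. zero_obj C z"
  and kex: "\<forall>f\<in>Arr C. \<exists>k. is_kernel C f k"
begin

lemma hom_arr: "f \<in> hom C a b \<Longrightarrow> f \<in> Arr C \<and> Dom C f = a \<and> Cod C f = b"
  by (simp add: hom_def)
lemma arr_hom: "f \<in> Arr C \<Longrightarrow> f \<in> hom C (Dom C f) (Cod C f)"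
  by (simp add: hom_def)
lemma comp: "f \<in> hom C a b \<Longrightarrow> g \<in> hom C b c \<Longrightarrow> Comp C g f \<in> hom C a c"
  using cat unfolding category_def by blast
lemma assoc: "f \<in> hom C a b \<Longrightarrow> g \<in> hom C b c \<Longrightarrow> h \<in> hom C c d \<Longrightarrow>
   Comp C h (Comp C g f) = Comp C (Comp C h g) f"
  using cat unfolding category_def by blast
lemma idl: "f \<in> hom C a b \<Longrightarrow> Comp C (Id C b) f = f"
  using cat unfolding category_def by blast
lemma idr: "f \<in> hom C a b \<Longrightarrow> Comp C f (Id C a) = f"
  using cat unfolding category_def by blast
lemma id_hom: "a \<in> Obj C \<Longrightarrow> Id C a \<in> hom C a a"
  using cat unfolding category_def by blast
lemma obj_dom: "f \<in> hom C a b \<Longrightarrow> a \<in> Obj C \<and> b \<in> Obj C"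
  using cat unfolding category_def hom_def by blast

lemma zero_compL:
  assumes "zero_mor C f" "g \<in> hom C (Cod C f) c"
  shows "zero_mor C (Comp C g f)"
proof -
  from assms(1) obtain z g0 h0 where z: "zero_obj C z" and g0: "g0 \<in> hom C (Dom C f) z"
    and h0: "h0 \<in> hom C z (Cod C f)" and f: "f = Comp C h0 g0"
    unfolding zero_mor_def by blast
  have fh: "f \<in> hom C (Dom C f) (Cod C f)" using assms(1) unfolding zero_mor_def by (simp add: arr_hom)
  have e: "Comp C g f = Comp C (Comp C g h0) g0" using assoc[OF g0 h0 assms(2)] f by simp
  have gh: "Comp C g h0 \<in> hom C z c" using comp[OF h0 assms(2)] .
  have gf: "Comp C g f \<in> hom C (Dom C f) c" using comp[OF fh assms(2)] .
  have d: "Comp C g f \<in> Arr C" "Dom C (Comp C g f) = Dom C f" "Cod C (Comp C g f) = c"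
    using hom_arr[OF gf] by auto
  show ?thesis unfolding zero_mor_def
    apply (rule conjI, rule d(1))
    apply (rule exI[of _ z], rule exI[of _ g0], rule exI[of _ "Comp C g h0"])
    using d z g0 gh e by simp
qed

lemma zero_compR:
  assumes "zero_mor C f" "h \<in> hom C x (Dom C f)"
  shows "zero_mor C (Comp C f h)"
proof -
  from assms(1) obtain z g0 h0 where z: "zero_obj C z" and g0: "g0 \<in> hom C (Dom C f) z"
    and h0: "h0 \<in> hom C z (Cod C f)" and f: "f = Comp C h0 g0"
    unfolding zero_mor_def by blast
  have fh: "f \<in> hom C (Dom C f) (Cod C f)" using assms(1) unfolding zero_mor_def by (simp add: arr_hom)
  have e: "Comp C f h = Comp C h0 (Comp C g0 h)" using assoc[OF assms(2) g0 h0] f by simp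
  have gh: "Comp C g0 h \<in> hom C x z" using comp[OF assms(2) g0] .
  have gf: "Comp C f h \<in> hom C x (Cod C f)" using comp[OF assms(2) fh] .
  have d: "Comp C f h \<in> Arr C" "Dom C (Comp C f h) = x" "Cod C (Comp C f h) = Cod C f"
    using hom_arr[OF gf] by auto
  show ?thesis unfolding zero_mor_def
    apply (rule conjI, rule d(1))
    apply (rule exI[of _ z], rule exI[of _ "Comp C g0 h"], rule exI[of _ h0])
    using d z h0 gh e by simp
qed

lemma zo_out: "zero_obj C z \<Longrightarrow> b \<in> Obj C \<Longrightarrow> f \<in> hom C z b \<Longrightarrow> g \<in> hom C z b \<Longrightarrow> f = g"
  unfolding zero_obj_def by blast
lemma zo_in: "zero_obj C z \<Longrightarrow> b \<in> Obj C \<Longrightarrow> f \<in> hom C b z \<Longrightarrow> g \<in> hom C b z \<Longrightarrow> f = g"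
  unfolding zero_obj_def by blast

lemma zero_unique:
  assumes "zero_mor C f" "zero_mor C g" "f \<in> hom C a b" "g \<in> hom C a b"
  shows "f = g"
proof -
  from assms(1) obtain z g0 h0 where z: "zero_obj C z" and g0: "g0 \<in> hom C a z"
    and h0: "h0 \<in> hom C z b" and f: "f = Comp C h0 g0"
    using assms(1) hom_arr[OF assms(3)] unfolding zero_mor_def by blast
  from assms(2) obtain z' g1 h1 where z': "zero_obj C z'" and g1: "g1 \<in> hom C a z'"
    and h1: "h1 \<in> hom C z' b" and g: "g = Comp C h1 g1"
    using assms(2) hom_arr[OF assms(4)] unfolding zero_mor_def by blast
  have zo: "z \<in> Obj C" "z' \<in> Obj C" using z z' unfolding zero_obj_def by auto
  obtain t where t: "t \<in> hom C z z'" using z zo unfolding zero_obj_def by blast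
  have "Comp C h1 t \<in> hom C z b" using comp[OF t h1] .
  hence e1: "h0 = Comp C h1 t" using zo_out[OF z _ h0] obj_dom[OF h0] by blast
  have "Comp C t g0 \<in> hom C a z'" using comp[OF g0 t] .
  hence e2: "g1 = Comp C t g0" using zo_in[OF z' _ g1] obj_dom[OF g1] by blast
  show ?thesis using f g e1 e2 assoc[OF g0 t h1] by simp
qed

lemma zero_exists:
  assumes "a \<in> Obj C" "b \<in> Obj C"
  shows "\<exists>f \<in> hom C a b. zero_mor C f"
proof -
  obtain z where z: "zero_obj C z" using zex by blast
  obtain g where g: "g \<in> hom C a z" using z assms unfolding zero_obj_def by blast
  obtain h where h: "h \<in> hom C z b" using z assms unfolding zero_obj_def by blast
  have c: "Comp C h g \<in> hom C a b" using comp[OF g h] .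
  have "zero_mor C (Comp C h g)" unfolding zero_mor_def
    using c z g h hom_arr[OF c] by blast
  thus ?thesis using c by blast
qed

lemma ker_hom: "is_kernel C f k \<Longrightarrow> k \<in> hom C (Dom C k) (Dom C f)"
  unfolding is_kernel_def hom_def by auto

lemma ker_zero: "is_kernel C f k \<Longrightarrow> zero_mor C (Comp C f k)"
  unfolding is_kernel_def by blast

lemma ker_ex1:
  assumes k: "is_kernel C f k" and g: "g \<in> hom C x (Dom C f)" and z: "zero_mor C (Comp C f g)"
  shows "\<exists>!u. u \<in> hom C x (Dom C k) \<and> Comp C k u = g"
proof -
  from k have H: "\<forall>g\<in>Arr C. Cod C g = Dom C f \<longrightarrow> zero_mor C (Comp C f g) \<longrightarrow>
        (\<exists>!u. u \<in> hom C (Dom C g) (Dom C k) \<and> Comp C k u = g)"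
    unfolding is_kernel_def by blast
  have g': "g \<in> Arr C" "Cod C g = Dom C f" "Dom C g = x" using hom_arr[OF g] by auto
  show ?thesis using H[rule_format, OF g'(1,2) z] g'(3) by simp
qed

lemma ker_mono:
  assumes "is_kernel C f k" shows "mono C k"
  unfolding mono_def
proof (intro conjI allI impI)
  show "k \<in> Arr C" using ker_hom[OF assms] hom_arr by blast
  fix x g h
  assume g: "g \<in> hom C x (Dom C k)" and h: "h \<in> hom C x (Dom C k)" and e: "Comp C k g = Comp C k h"
  have kh: "k \<in> hom C (Dom C k) (Dom C f)" using ker_hom[OF assms] .
  have fh: "f \<in> hom C (Dom C f) (Cod C f)" using assms unfolding is_kernel_def by (simp add: arr_hom)
  have kg: "Comp C k g \<in> hom C x (Dom C f)" using comp[OF g kh] .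
  have fk: "Comp C f k \<in> hom C (Dom C k) (Cod C f)" using comp[OF kh fh] .
  have "zero_mor C (Comp C (Comp C f k) g)"
    using zero_compR[OF ker_zero[OF assms], of g x] hom_arr[OF fk] g by simp
  hence z: "zero_mor C (Comp C f (Comp C k g))" using assoc[OF g kh fh] by simp
  have "\<exists>!u. u \<in> hom C x (Dom C k) \<and> Comp C k u = Comp C k g"
    using ker_ex1[OF assms kg z] .
  moreover have "g \<in> hom C x (Dom C k) \<and> Comp C k g = Comp C k g" using g by simp
  moreover have "h \<in> hom C x (Dom C k) \<and> Comp C k h = Comp C k g" using h e by simp
  ultimately show "g = h" by (rule Ex1_unique_lemma)
qed

lemma ker_factor:
  assumes "is_kernel C f k" "g \<in> hom C x (Dom C f)" "zero_mor C (Comp C f g)"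
  shows "\<exists>u \<in> hom C x (Dom C k). Comp C k u = g"
  using ker_ex1[OF assms] by blast


lemma bip_univ:
  assumes b: "is_biproduct C n N S \<iota> \<pi>" and fi: "\<forall>i\<in>{1..n}. f i \<in> hom C x (N i)"
  shows "\<exists>!u. u \<in> hom C x S \<and> (\<forall>i\<in>{1..n}. Comp C (\<pi> i) u = f i)"
proof -
  have H: "\<forall>x f. (\<forall>i \<in> {1..n}. f i \<in> hom C x (N i)) \<longrightarrow>
        (\<exists>!u. u \<in> hom C x S \<and> (\<forall>i \<in> {1..n}. Comp C (\<pi> i) u = f i))"
    using b unfolding is_biproduct_def by (elim conjE) assumption
  show ?thesis using mp[OF spec[OF spec[OF H]] fi] .
qed

lemma bip_couniv:
  assumes b: "is_biproduct C n N S \<iota> \<pi>" and fi: "\<forall>i\<in>{1..n}. f i \<in> hom C (N i) x"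
  shows "\<exists>!u. u \<in> hom C S x \<and> (\<forall>i\<in>{1..n}. Comp C u (\<iota> i) = f i)"
proof -
  have H: "\<forall>x f. (\<forall>i \<in> {1..n}. f i \<in> hom C (N i) x) \<longrightarrow>
        (\<exists>!u. u \<in> hom C S x \<and> (\<forall>i \<in> {1..n}. Comp C u (\<iota> i) = f i))"
    using b unfolding is_biproduct_def by (elim conjE) assumption
  show ?thesis using mp[OF spec[OF spec[OF H]] fi] .
qed

lemma bip_comps:
  assumes b: "is_biproduct C n N S \<iota> \<pi>" and i: "i \<in> {1..n}"
  shows "\<iota> i \<in> hom C (N i) S" "\<pi> i \<in> hom C S (N i)" "Comp C (\<pi> i) (\<iota> i) = Id C (N i)"
proof -
  have H: "\<forall>i \<in> {1..n}. \<iota> i \<in> hom C (N i) S \<and> \<pi> i \<in> hom C S (N i) \<and>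
        Comp C (\<pi> i) (\<iota> i) = Id C (N i)"
    using b unfolding is_biproduct_def by (elim conjE) assumption
  show "\<iota> i \<in> hom C (N i) S" "\<pi> i \<in> hom C S (N i)" "Comp C (\<pi> i) (\<iota> i) = Id C (N i)"
    using H i by auto
qed

lemma bip_obj: "is_biproduct C n N S \<iota> \<pi> \<Longrightarrow> S \<in> Obj C"
  unfolding is_biproduct_def by (elim conjE) assumption

lemma bip_zero:
  assumes b: "is_biproduct C n N S \<iota> \<pi>" and g: "g \<in> hom C x S"
    and z: "\<forall>i\<in>{1..n}. zero_mor C (Comp C (\<pi> i) g)"
  shows "zero_mor C g"
proof -
  have xo: "x \<in> Obj C" "S \<in> Obj C" using obj_dom[OF g] by auto
  obtain z0 where z0: "z0 \<in> hom C x S" "zero_mor C z0" using zero_exists[OF xo] by blast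
  have pi: "\<forall>i\<in>{1..n}. \<pi> i \<in> hom C S (N i)" using bip_comps[OF b] by blast
  have eq: "\<forall>i\<in>{1..n}. Comp C (\<pi> i) z0 = Comp C (\<pi> i) g"
  proof
    fix i assume i: "i \<in> {1..n}"
    have h1: "Comp C (\<pi> i) z0 \<in> hom C x (N i)" using comp[OF z0(1)] pi i by blast
    have h2: "Comp C (\<pi> i) g \<in> hom C x (N i)" using comp[OF g] pi i by blast
    have "zero_mor C (Comp C (\<pi> i) z0)" using zero_compL[OF z0(2)] pi i hom_arr[OF z0(1)] by metis
    thus "Comp C (\<pi> i) z0 = Comp C (\<pi> i) g" using zero_unique h1 h2 z i by blast
  qed
  have "\<forall>i\<in>{1..n}. (\<lambda>i. Comp C (\<pi> i) g) i \<in> hom C x (N i)" using comp[OF g] pi by blast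
  hence "\<exists>!u. u \<in> hom C x S \<and> (\<forall>i\<in>{1..n}. Comp C (\<pi> i) u = (\<lambda>i. Comp C (\<pi> i) g) i)"
    by (rule bip_univ[OF b])
  hence u: "\<And>u v. u \<in> hom C x S \<and> (\<forall>i\<in>{1..n}. Comp C (\<pi> i) u = Comp C (\<pi> i) g) \<Longrightarrow>
     v \<in> hom C x S \<and> (\<forall>i\<in>{1..n}. Comp C (\<pi> i) v = Comp C (\<pi> i) g) \<Longrightarrow> u = v"
    by (metis (no_types, lifting))
  have "g = z0" by (rule u) (use g z0 eq in auto)
  thus ?thesis using z0 by simp
qed

lemma ker_post_split:
  assumes k: "is_kernel C f k" and f: "f \<in> hom C a b" and m: "m \<in> hom C b c"
    and p: "p \<in> hom C c b" and pm: "Comp C p m = Id C b"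
  shows "is_kernel C (Comp C m f) k"
proof -
  have mf: "Comp C m f \<in> hom C a c" using comp[OF f m] .
  have kh: "k \<in> hom C (Dom C k) a" using ker_hom[OF k] hom_arr[OF f] by simp
  have fk: "Comp C f k \<in> hom C (Dom C k) b" using comp[OF kh f] .
  have "zero_mor C (Comp C m (Comp C f k))"
    using zero_compL[OF ker_zero[OF k], of m c] hom_arr[OF fk] m by simp
  hence z1: "zero_mor C (Comp C (Comp C m f) k)" using assoc[OF kh f m] by simp
  have equiv: "zero_mor C (Comp C f g)" if g: "g \<in> hom C x a" and zz: "zero_mor C (Comp C (Comp C m f) g)" for g x
  proof -
    have fg: "Comp C f g \<in> hom C x b" using comp[OF g f] .
    have mfg: "Comp C (Comp C m f) g \<in> hom C x c" using comp[OF g mf] .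
    have "Comp C p (Comp C (Comp C m f) g) = Comp C f g"
      using assoc[OF g f m] assoc[OF fg m p] pm idl[OF fg] by simp
    moreover have "zero_mor C (Comp C p (Comp C (Comp C m f) g))"
      using zero_compL[OF zz, of p b] p hom_arr[OF mfg] by simp
    ultimately show ?thesis by simp
  qed
  show ?thesis unfolding is_kernel_def
  proof (intro conjI ballI impI)
    show "Comp C m f \<in> Arr C" using mf hom_arr by blast
    show "k \<in> Arr C" using kh hom_arr by blast
    show "Cod C k = Dom C (Comp C m f)" using hom_arr[OF kh] hom_arr[OF mf] by simp
    show "zero_mor C (Comp C (Comp C m f) k)" using z1 .
    fix g assume g: "g \<in> Arr C" "Cod C g = Dom C (Comp C m f)" "zero_mor C (Comp C (Comp C m f) g)"
    have gh: "g \<in> hom C (Dom C g) a" using arr_hom[OF g(1)] g(2) hom_arr[OF mf] by simp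
    have "zero_mor C (Comp C f g)" using equiv[OF gh g(3)] .
    thus "\<exists>!u. u \<in> hom C (Dom C g) (Dom C k) \<and> Comp C k u = g"
      using ker_ex1[OF k] gh hom_arr[OF f] by simp
  qed
qed


lemma sr_use: "strongly_rickart C M N \<Longrightarrow> f \<in> hom C M N \<Longrightarrow> is_kernel C f k \<Longrightarrow> is_section C k \<and> fully_invariant C k"
  unfolding strongly_rickart_def by blast

lemma mono_cancel: "mono C k \<Longrightarrow> g \<in> hom C x (Dom C k) \<Longrightarrow> h \<in> hom C x (Dom C k) \<Longrightarrow> Comp C k g = Comp C k h \<Longrightarrow> g = h"
  unfolding mono_def by blast

lemma part1:
  assumes M: "M \<in> Obj C" and b: "is_biproduct C n N S \<iota> \<pi>"
  shows "strongly_rickart C M S \<longleftrightarrow> (\<forall>i\<in>{1..n}. strongly_rickart C M (N i))"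
proof
  assume sr: "strongly_rickart C M S"
  show "\<forall>i\<in>{1..n}. strongly_rickart C M (N i)"
  proof (intro ballI)
    fix i assume i: "i \<in> {1..n}"
    show "strongly_rickart C M (N i)" unfolding strongly_rickart_def
    proof (intro ballI allI impI)
      fix f k assume f: "f \<in> hom C M (N i)" and k: "is_kernel C f k"
      have "is_kernel C (Comp C (\<iota> i) f) k"
        by (rule ker_post_split[OF k f bip_comps(1)[OF b i] bip_comps(2)[OF b i] bip_comps(3)[OF b i]])
      moreover have "Comp C (\<iota> i) f \<in> hom C M S" using comp[OF f bip_comps(1)[OF b i]] .
      ultimately show "is_section C k \<and> fully_invariant C k"
        using sr_use[OF sr] k by blast
    qed
  qed
next
  assume H: "\<forall>i\<in>{1..n}. strongly_rickart C M (N i)"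
  show "strongly_rickart C M S" unfolding strongly_rickart_def
  proof (intro ballI allI impI)
    fix f k assume f: "f \<in> hom C M S" and k: "is_kernel C f k"
    define K where "K = Dom C k"
    have kh: "k \<in> hom C K M" using ker_hom[OF k] hom_arr[OF f] K_def by simp
    have Ko: "K \<in> Obj C" using obj_dom[OF kh] by simp
    have km: "mono C k" by (rule ker_mono[OF k])
    have pf: "\<forall>i\<in>{1..n}. Comp C (\<pi> i) f \<in> hom C M (N i)" using comp[OF f] bip_comps(2)[OF b] by blast
    have "\<forall>i\<in>{1..n}. \<exists>kk. is_kernel C (Comp C (\<pi> i) f) kk"
    proof
      fix i assume i: "i \<in> {1..n}"
      have "Comp C (\<pi> i) f \<in> Arr C" using pf i hom_arr by blast
      thus "\<exists>kk. is_kernel C (Comp C (\<pi> i) f) kk" using kex by blast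
    qed
    from bchoice[OF this] obtain kk where kk: "\<forall>i\<in>{1..n}. is_kernel C (Comp C (\<pi> i) f) (kk i)"
      by blast
    have kkp: "\<forall>i\<in>{1..n}. is_section C (kk i) \<and> fully_invariant C (kk i)"
    proof
      fix i assume i: "i \<in> {1..n}"
      show "is_section C (kk i) \<and> fully_invariant C (kk i)"
        using sr_use[of M "N i" "Comp C (\<pi> i) f" "kk i"] H pf kk i by blast
    qed
    have kkh: "\<forall>i\<in>{1..n}. kk i \<in> hom C (Dom C (kk i)) M"
    proof
      fix i assume i: "i \<in> {1..n}"
      have "kk i \<in> hom C (Dom C (kk i)) (Dom C (Comp C (\<pi> i) f))" using ker_hom kk i by blast
      moreover have "Dom C (Comp C (\<pi> i) f) = M" using pf i hom_arr by blast
      ultimately show "kk i \<in> hom C (Dom C (kk i)) M" by simp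
    qed
    have "\<forall>i\<in>{1..n}. \<exists>r. r \<in> hom C M (Dom C (kk i)) \<and> Comp C r (kk i) = Id C (Dom C (kk i))"
    proof
      fix i assume i: "i \<in> {1..n}"
      have "is_section C (kk i)" using kkp i by blast
      then obtain r where "r \<in> hom C (Cod C (kk i)) (Dom C (kk i))" "Comp C r (kk i) = Id C (Dom C (kk i))"
        unfolding is_section_def by blast
      moreover have "Cod C (kk i) = M" using kkh i hom_arr by blast
      ultimately show "\<exists>r. r \<in> hom C M (Dom C (kk i)) \<and> Comp C r (kk i) = Id C (Dom C (kk i))" by auto
    qed
    from bchoice[OF this] obtain rr where rr: "\<forall>i\<in>{1..n}. rr i \<in> hom C M (Dom C (kk i)) \<and> Comp C (rr i) (kk i) = Id C (Dom C (kk i))"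
      by blast
    have kfi: "\<forall>h\<in>hom C M M. \<exists>\<alpha>\<in>hom C (Dom C (kk i)) (Dom C (kk i)). Comp C h (kk i) = Comp C (kk i) \<alpha>"
      if i: "i \<in> {1..n}" for i
    proof -
      have "fully_invariant C (kk i)" using kkp i by blast
      moreover have "Cod C (kk i) = M" using kkh i hom_arr by blast
      ultimately show ?thesis unfolding fully_invariant_def by simp
    qed
    have lands: "\<exists>r\<in>hom C x K. Comp C k r = g"
      if g: "g \<in> hom C x M" and gl: "\<forall>i\<in>{1..n}. \<exists>\<gamma>\<in>hom C x (Dom C (kk i)). Comp C (kk i) \<gamma> = g" for g x
    proof -
      have fg: "Comp C f g \<in> hom C x S" using comp[OF g f] .
      have "\<forall>i\<in>{1..n}. zero_mor C (Comp C (\<pi> i) (Comp C f g))"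
      proof
        fix i assume i: "i \<in> {1..n}"
        obtain \<gamma> where ga: "\<gamma> \<in> hom C x (Dom C (kk i))" and ge: "Comp C (kk i) \<gamma> = g" using gl i by blast
        have pfi: "Comp C (\<pi> i) f \<in> hom C M (N i)" using pf i by blast
        have ki: "kk i \<in> hom C (Dom C (kk i)) M" using kkh i by blast
        have "Comp C (\<pi> i) (Comp C f g) = Comp C (Comp C (\<pi> i) f) g"
          using assoc[OF g f bip_comps(2)[OF b i]] .
        also have "\<dots> = Comp C (Comp C (Comp C (\<pi> i) f) (kk i)) \<gamma>"
          using ge assoc[OF ga ki pfi] by simp
        finally have e: "Comp C (\<pi> i) (Comp C f g) = Comp C (Comp C (Comp C (\<pi> i) f) (kk i)) \<gamma>" .
        have pk: "Comp C (Comp C (\<pi> i) f) (kk i) \<in> hom C (Dom C (kk i)) (N i)" using comp[OF ki pfi] .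
        have "zero_mor C (Comp C (Comp C (Comp C (\<pi> i) f) (kk i)) \<gamma>)"
          using zero_compR[OF ker_zero[of "Comp C (\<pi> i) f" "kk i"], of \<gamma> x] kk i ga hom_arr[OF pk] by simp
        thus "zero_mor C (Comp C (\<pi> i) (Comp C f g))" using e by simp
      qed
      hence "zero_mor C (Comp C f g)" by (rule bip_zero[OF b fg])
      thus ?thesis using ker_factor[OF k, of g x] g hom_arr[OF f] K_def by simp
    qed
    have kf: "\<forall>i\<in>{1..n}. \<exists>\<beta>\<in>hom C K (Dom C (kk i)). Comp C (kk i) \<beta> = k"
    proof
      fix i assume i: "i \<in> {1..n}"
      have pi: "\<pi> i \<in> hom C S (N i)" using bip_comps(2)[OF b i] .
      have fk: "Comp C f k \<in> hom C K S" using comp[OF kh f] .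
      have "zero_mor C (Comp C (\<pi> i) (Comp C f k))"
        using zero_compL[OF ker_zero[OF k], of "\<pi> i" "N i"] pi hom_arr[OF fk] by simp
      hence z: "zero_mor C (Comp C (Comp C (\<pi> i) f) k)" using assoc[OF kh f pi] by simp
      have "Dom C (Comp C (\<pi> i) f) = M" using pf i hom_arr by blast
      thus "\<exists>\<beta>\<in>hom C K (Dom C (kk i)). Comp C (kk i) \<beta> = k"
        using ker_factor[of "Comp C (\<pi> i) f" "kk i" k K] kk i kh z by simp
    qed
    have fi: "fully_invariant C k" unfolding fully_invariant_def
    proof (intro conjI ballI)
      show "mono C k" by (rule km)
      fix h assume h0: "h \<in> hom C (Cod C k) (Cod C k)"
      have h: "h \<in> hom C M M" using h0 hom_arr[OF kh] by simp
      have hk: "Comp C h k \<in> hom C K M" using comp[OF kh h] .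
      have "\<forall>i\<in>{1..n}. \<exists>\<gamma>\<in>hom C K (Dom C (kk i)). Comp C (kk i) \<gamma> = Comp C h k"
      proof
        fix i assume i: "i \<in> {1..n}"
        obtain \<beta> where be: "\<beta> \<in> hom C K (Dom C (kk i))" "Comp C (kk i) \<beta> = k" using kf i by blast
        obtain \<alpha> where al: "\<alpha> \<in> hom C (Dom C (kk i)) (Dom C (kk i))" "Comp C h (kk i) = Comp C (kk i) \<alpha>"
          using kfi[OF i] h by blast
        have ki: "kk i \<in> hom C (Dom C (kk i)) M" using kkh i by blast
        have "Comp C h k = Comp C (Comp C h (kk i)) \<beta>" using be(2) assoc[OF be(1) ki h] by simp
        also have "\<dots> = Comp C (kk i) (Comp C \<alpha> \<beta>)" using al(2) assoc[OF be(1) al(1) ki] by simp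
        finally have eq: "Comp C h k = Comp C (kk i) (Comp C \<alpha> \<beta>)" .
        show "\<exists>\<gamma>\<in>hom C K (Dom C (kk i)). Comp C (kk i) \<gamma> = Comp C h k"
          by (rule bexI[of _ "Comp C \<alpha> \<beta>"]) (use eq comp[OF be(1) al(1)] in auto)
      qed
      then obtain r where r: "r \<in> hom C K K" "Comp C k r = Comp C h k" using lands[OF hk] by blast
      show "\<exists>\<alpha>\<in>hom C (Dom C k) (Dom C k). Comp C h k = Comp C k \<alpha>"
        by (rule bexI[of _ r]) (use r K_def in auto)
    qed
    define e where "e i = Comp C (kk i) (rr i)" for i
    have eh: "e i \<in> hom C M M" if i: "i \<in> {1..n}" for i
      unfolding e_def by (rule comp[of "rr i" M "Dom C (kk i)" "kk i" M]) (use rr kkh i in auto)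
    have ind: "m \<le> n \<Longrightarrow> phis C M e m \<in> hom C M M \<and> Comp C (phis C M e m) k = k \<and>
       (\<forall>j\<in>{1..m}. \<exists>\<gamma>\<in>hom C M (Dom C (kk j)). Comp C (kk j) \<gamma> = phis C M e m)" for m
    proof (induction m)
      case 0
      then show ?case using id_hom[OF M] idl[OF kh] by simp
    next
      case (Suc m)
      have i: "Suc m \<in> {1..n}" using Suc.prems by simp
      have IH: "phis C M e m \<in> hom C M M" "Comp C (phis C M e m) k = k"
        "\<forall>j\<in>{1..m}. \<exists>\<gamma>\<in>hom C M (Dom C (kk j)). Comp C (kk j) \<gamma> = phis C M e m"
        using Suc by auto
      let ?P = "phis C M e m"
      let ?k = "kk (Suc m)" and ?r = "rr (Suc m)" and ?D = "Dom C (kk (Suc m))"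
      have ki: "?k \<in> hom C ?D M" using kkh i by blast
      have ri: "?r \<in> hom C M ?D" "Comp C ?r ?k = Id C ?D" using rr i by auto
      have ei: "e (Suc m) \<in> hom C M M" using eh[OF i] .
      have h1: "phis C M e (Suc m) \<in> hom C M M" using comp[OF IH(1) ei] by simp
      obtain \<beta> where be: "\<beta> \<in> hom C K ?D" "Comp C ?k \<beta> = k" using kf i by blast
      have "Comp C ?r k = Comp C ?r (Comp C ?k \<beta>)" using be(2) by simp
      also have "\<dots> = Comp C (Comp C ?r ?k) \<beta>" by (rule assoc[OF be(1) ki ri(1)])
      also have "\<dots> = \<beta>" using ri(2) idl[OF be(1)] by simp
      finally have rk: "Comp C ?r k = \<beta>" .
      have "Comp C (e (Suc m)) k = Comp C (Comp C ?k ?r) k" by (simp add: e_def)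
      also have "\<dots> = Comp C ?k (Comp C ?r k)" by (rule assoc[OF kh ri(1) ki, symmetric])
      also have "\<dots> = k" using rk be(2) by simp
      finally have ek: "Comp C (e (Suc m)) k = k" .
      have "Comp C (phis C M e (Suc m)) k = Comp C (Comp C (e (Suc m)) ?P) k" by simp
      also have "\<dots> = Comp C (e (Suc m)) (Comp C ?P k)" by (rule assoc[OF kh IH(1) ei, symmetric])
      also have "\<dots> = k" using IH(2) ek by simp
      finally have h2: "Comp C (phis C M e (Suc m)) k = k" .
      have h3: "\<forall>j\<in>{1..Suc m}. \<exists>\<gamma>\<in>hom C M (Dom C (kk j)). Comp C (kk j) \<gamma> = phis C M e (Suc m)"
      proof
        fix j assume j: "j \<in> {1..Suc m}"
        show "\<exists>\<gamma>\<in>hom C M (Dom C (kk j)). Comp C (kk j) \<gamma> = phis C M e (Suc m)"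
        proof (cases "j = Suc m")
          case True
          have "Comp C ?k (Comp C ?r ?P) = phis C M e (Suc m)"
            using assoc[OF IH(1) ri(1) ki] e_def by simp
          moreover have "Comp C ?r ?P \<in> hom C M ?D" using comp[OF IH(1) ri(1)] .
          ultimately show ?thesis using True by blast
        next
          case False
          hence j': "j \<in> {1..m}" and jn: "j \<in> {1..n}" using j Suc.prems by auto
          obtain \<gamma> where ga: "\<gamma> \<in> hom C M (Dom C (kk j))" "Comp C (kk j) \<gamma> = ?P" using IH(3) j' by blast
          obtain \<alpha> where al: "\<alpha> \<in> hom C (Dom C (kk j)) (Dom C (kk j))" "Comp C (e (Suc m)) (kk j) = Comp C (kk j) \<alpha>"
            using kfi[OF jn] ei by blast
          have kj: "kk j \<in> hom C (Dom C (kk j)) M" using kkh jn by blast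
          have "phis C M e (Suc m) = Comp C (e (Suc m)) (Comp C (kk j) \<gamma>)" using ga(2) by simp
          also have "\<dots> = Comp C (Comp C (kk j) \<alpha>) \<gamma>" using assoc[OF ga(1) kj ei] al(2) by simp
          also have "\<dots> = Comp C (kk j) (Comp C \<alpha> \<gamma>)" using assoc[OF ga(1) al(1) kj] by simp
          finally have eq: "phis C M e (Suc m) = Comp C (kk j) (Comp C \<alpha> \<gamma>)" .
          show ?thesis
            by (rule bexI[of _ "Comp C \<alpha> \<gamma>"]) (use eq comp[OF ga(1) al(1)] in auto)
        qed
      qed
      show ?case using h1 h2 h3 by blast
    qed
    have fin: "phis C M e n \<in> hom C M M" "Comp C (phis C M e n) k = k"
       "\<forall>j\<in>{1..n}. \<exists>\<gamma>\<in>hom C M (Dom C (kk j)). Comp C (kk j) \<gamma> = phis C M e n"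
      using ind[of n] by auto
    obtain r where r: "r \<in> hom C M K" "Comp C k r = phis C M e n" using lands[OF fin(1) fin(3)] by blast
    have rk: "Comp C r k \<in> hom C K K" using comp[OF kh r(1)] .
    have "Comp C k (Comp C r k) = k" using assoc[OF kh r(1) kh] r(2) fin(2) by simp
    also have "\<dots> = Comp C k (Id C K)" using idr[OF kh] by simp
    finally have calc: "Comp C k (Comp C r k) = Comp C k (Id C K)" .
    have "Comp C r k = Id C K"
      by (rule mono_cancel[OF km, of _ K]) (use rk id_hom[OF Ko] K_def calc in auto)
    hence "is_section C k" unfolding is_section_def using r(1) hom_arr[OF kh] by auto
    thus "is_section C k \<and> fully_invariant C k" using fi by blast
  qed
qed

end


definition opc :: "('o, 'm) cat \<Rightarrow> ('o, 'm) cat" where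
  "opc C = C\<lparr>Dom := Cod C, Cod := Dom C, Comp := (\<lambda>g f. Comp C f g)\<rparr>"

lemma opc_simps[simp]: "Obj (opc C) = Obj C" "Arr (opc C) = Arr C" "Dom (opc C) = Cod C"
  "Cod (opc C) = Dom C" "Comp (opc C) g f = Comp C f g" "Id (opc C) = Id C"
  by (simp_all add: opc_def)

lemma opc_hom[simp]: "hom (opc C) a b = hom C b a"
  by (auto simp: hom_def)

lemma opc_category: "category C \<Longrightarrow> category (opc C)"
proof -
  assume c: "category C"
  show ?thesis unfolding category_def
  proof (intro conjI allI impI ballI)
    fix f assume "f \<in> Arr (opc C)"
    thus "Dom (opc C) f \<in> Obj (opc C)" "Cod (opc C) f \<in> Obj (opc C)"
      using c unfolding category_def by auto
  next
    fix a assume "a \<in> Obj (opc C)"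
    thus "Id (opc C) a \<in> hom (opc C) a a" using c unfolding category_def by auto
  next
    fix a b c' f g assume "f \<in> hom (opc C) a b" "g \<in> hom (opc C) b c'"
    thus "Comp (opc C) g f \<in> hom (opc C) a c'" using c unfolding category_def by auto
  next
    fix a b c' d f g h assume "f \<in> hom (opc C) a b" "g \<in> hom (opc C) b c'" "h \<in> hom (opc C) c' d"
    thus "Comp (opc C) h (Comp (opc C) g f) = Comp (opc C) (Comp (opc C) h g) f"
      using c unfolding category_def by auto
  next
    fix a b f assume "f \<in> hom (opc C) a b"
    thus "Comp (opc C) f (Id (opc C) a) = f" "Comp (opc C) (Id (opc C) b) f = f"
      using c unfolding category_def by auto
  qed
qed

lemma opc_mono[simp]: "mono (opc C) f = epi C f"
  unfolding mono_def epi_def by simp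

lemma opc_zero_obj[simp]: "zero_obj (opc C) z = zero_obj C z"
  unfolding zero_obj_def by auto

lemma opc_zero_mor[simp]: "zero_mor (opc C) f = zero_mor C f"
  unfolding zero_mor_def by auto

lemma opc_kernel[simp]: "is_kernel (opc C) f k = is_cokernel C f k"
  unfolding is_kernel_def is_cokernel_def by simp

lemma opc_section[simp]: "is_section (opc C) f = is_retraction C f"
  unfolding is_section_def is_retraction_def by simp

lemma opc_fi[simp]: "fully_invariant (opc C) f = fully_coinvariant C f"
  unfolding fully_invariant_def fully_coinvariant_def by simp

lemma opc_sr[simp]: "strongly_rickart (opc C) N M = dual_strongly_rickart C M N"
  unfolding strongly_rickart_def dual_strongly_rickart_def by simp

lemma opc_bip: "is_biproduct C n N S \<iota> \<pi> \<Longrightarrow> is_biproduct (opc C) n N S \<pi> \<iota>"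
  unfolding is_biproduct_def by simp

theorem theorem3p1:
  fixes C :: "('o, 'm) cat"
  assumes "abelian_cat C"
  shows
    "(\<forall>(n::nat) M N S \<iota> \<pi>. M \<in> Obj C \<longrightarrow> (\<forall>i \<in> {1..n}. N i \<in> Obj C) \<longrightarrow>
        is_biproduct C n N S \<iota> \<pi> \<longrightarrow>
        (strongly_rickart C M S \<longleftrightarrow> (\<forall>i \<in> {1..n}. strongly_rickart C M (N i))))
     \<and>
     (\<forall>(n::nat) Ms N S \<iota> \<pi>. N \<in> Obj C \<longrightarrow> (\<forall>i \<in> {1..n}. Ms i \<in> Obj C) \<longrightarrow>
        is_biproduct C n Ms S \<iota> \<pi> \<longrightarrow>
        (dual_strongly_rickart C S N \<longleftrightarrow> (\<forall>i \<in> {1..n}. dual_strongly_rickart C (Ms i) N)))"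
proof -
  have ab: "category C" "\<exists>z. zero_obj C z" "\<forall>f\<in>Arr C. \<exists>k. is_kernel C f k"
    "\<forall>f\<in>Arr C. \<exists>c. is_cokernel C f c"
    using assms unfolding abelian_cat_def by blast+
  interpret K1: kcat C using ab by (simp add: kcat_def)
  interpret K2: kcat "opc C" using ab opc_category by (simp add: kcat_def)
  show ?thesis
  proof (intro conjI allI impI)
    fix n :: nat and M N S \<iota> \<pi>
    assume "M \<in> Obj C" "is_biproduct C n N S \<iota> \<pi>"
    thus "strongly_rickart C M S \<longleftrightarrow> (\<forall>i \<in> {1..n}. strongly_rickart C M (N i))"
      by (rule K1.part1)
  next
    fix n :: nat and Ms N S \<iota> \<pi>
    assume "N \<in> Obj C" "is_biproduct C n Ms S \<iota> \<pi>"
    hence "strongly_rickart (opc C) N S \<longleftrightarrow> (\<forall>i \<in> {1..n}. strongly_rickart (opc C) N (Ms i))"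
      using K2.part1[of N n Ms S \<pi> \<iota>] opc_bip[of C n Ms S \<iota> \<pi>] by simp
    thus "dual_strongly_rickart C S N \<longleftrightarrow> (\<forall>i \<in> {1..n}. dual_strongly_rickart C (Ms i) N)"
      by simp
  qed
qed

end
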